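(* Let $\mathcal L:\mathcal Y\times\mathbb R^d\to\mathbb R$ be continuously differentiable and $\mu$-strongly convex. Let $Q$ be a probability distribution over functions $g:\mathcal X\to\mathbb R^d$, fix $k\ge1$, and let $G=\{g_1,\dots,g_k\}\sim Q^k$ and $G'=\{g'_1,\dots,g'_k\}\sim Q^k$ be independent. Define \[ f_1=\arg\min_{f\in V(G)}\mathbb E[\mathcal L(y,f(x))],\qquad f_2=\arg\min_{f\in V(G')}\mathbb E[\mathcal L(y,f(x))]. \] Then \[ \mathbb E_{f_1,f_2}[D(f_1,f_2)]\le\frac8\mu\big(\bar R_k-\bar R_{2k}\big). \]
   Context: $P$ is a distribution on $\mathcal X\times\mathcal Y$; expectations are over $(x,y)\sim P$ unless indicated. $\mathcal L$ is $\mu$-strongly convex ($\mu>0$) if for all $y\in\mathcal Y$ and $P_1,P_2\in\mathbb R^d$: $\mathcal L(y,P_1)\ge\mathcal L(y,P_2)+\langle\nabla_p\mathcal L(y,P_2),P_1-P_2\rangle+\frac\mu2\|P_1-P_2\|_2^2$. For $f:\mathcal X\to\mathbb R^d$, $R(f)=\mathbb E[\mathcal L(y,f(x))]$, and $D(f_1,f_2)=\mathbb E[\|f_1(x)-f_2(x)\|_2^2]$. For a finite multiset $G$ of functions $\mathcal X\to\mathbb R^d$, $V(G)$ is their linear span (real coefficients) and $R(G)=\min_{f\in V(G)}R(f)$ (minimizers assumed to exist). $\bar R_t=\mathbb E[R(\{g_1,\dots,g_t\})]$ with $g_1,\dots,g_t$ i.i.d. from $Q$. The outer expectation in the conclusion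 is over $G,G'$. *)

theory Defs
  imports "HOL-Probability.Probability"
begin

definition strongly_convex_loss ::
  "real \<Rightarrow> ('y \<Rightarrow> 'v::real_inner \<Rightarrow> real) \<Rightarrow> ('y \<Rightarrow> 'v \<Rightarrow> 'v) \<Rightarrow> bool" where
  "strongly_convex_loss \<mu> L gL \<longleftrightarrow> \<mu> > 0 \<and>
     (\<forall>y p1 p2. L y p1 \<ge> L y p2 + inner (gL y p2) (p1 - p2) + \<mu> / 2 * (norm (p1 - p2))\<^sup>2)"

definition Vspan :: "nat \<Rightarrow> (nat \<Rightarrow> 'x \<Rightarrow> 'v::real_vector) \<Rightarrow> ('x \<Rightarrow> 'v) set" where
  "Vspan t G = {(\<lambda>x. \<Sum>i<t. c i *\<^sub>R G i x) | c. True}"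

definition risk :: "('x \<times> 'y) measure \<Rightarrow> ('y \<Rightarrow> 'v \<Rightarrow> real) \<Rightarrow> ('x \<Rightarrow> 'v) \<Rightarrow> real" where
  "risk P L f = (\<integral>z. L (snd z) (f (fst z)) \<partial>P)"

definition Dist :: "('x \<times> 'y) measure \<Rightarrow> ('x \<Rightarrow> 'v::real_normed_vector) \<Rightarrow> ('x \<Rightarrow> 'v) \<Rightarrow> real" where
  "Dist P f1 f2 = (\<integral>z. (norm (f1 (fst z) - f2 (fst z)))\<^sup>2 \<partial>P)"

definition riskV :: "('x \<times> 'y) measure \<Rightarrow> ('y \<Rightarrow> 'v::real_vector \<Rightarrow> real) \<Rightarrow> nat \<Rightarrow> (nat \<Rightarrow> 'x \<Rightarrow> 'v) \<Rightarrow> real" where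
  "riskV P L t G = Inf (risk P L ` Vspan t G)"

definition argminV :: "('x \<times> 'y) measure \<Rightarrow> ('y \<Rightarrow> 'v::real_vector \<Rightarrow> real) \<Rightarrow> nat \<Rightarrow> (nat \<Rightarrow> 'x \<Rightarrow> 'v) \<Rightarrow> ('x \<Rightarrow> 'v)" where
  "argminV P L t G = (SOME f. f \<in> Vspan t G \<and> (\<forall>h\<in>Vspan t G. risk P L f \<le> risk P L h))"

definition Rbar :: "('x \<times> 'y) measure \<Rightarrow> ('y \<Rightarrow> 'v::real_vector \<Rightarrow> real) \<Rightarrow> ('x \<Rightarrow> 'v) measure \<Rightarrow> nat \<Rightarrow> real" where
  "Rbar P L Q t = (\<integral>G. riskV P L t G \<partial>(PiM {..<t} (\<lambda>_. Q)))"

end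

theory Submission
  imports Defs
begin


lemma Vspan_I:
  assumes "f = (\<lambda>x. \<Sum>i<t. c i *\<^sub>R H i x)"
  shows "f \<in> Vspan t H"
  using assms unfolding Vspan_def by (intro CollectI exI[of _ c]) simp

lemma Vspan_lin:
  assumes "f1 \<in> Vspan t H" "f2 \<in> Vspan t H"
  shows "(\<lambda>x. a *\<^sub>R f1 x + b *\<^sub>R f2 x) \<in> Vspan t H"
proof -
  obtain c1 where c1: "f1 = (\<lambda>x. \<Sum>i<t. c1 i *\<^sub>R H i x)" using assms(1) unfolding Vspan_def by auto
  obtain c2 where c2: "f2 = (\<lambda>x. \<Sum>i<t. c2 i *\<^sub>R H i x)" using assms(2) unfolding Vspan_def by auto
  have "(\<lambda>x. a *\<^sub>R f1 x + b *\<^sub>R f2 x) = (\<lambda>x. \<Sum>i<t. (a * c1 i + b * c2 i) *\<^sub>R H i x)"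
    by (auto simp: c1 c2 scaleR_sum_right sum.distrib[symmetric] scaleR_add_left intro!: sum.cong)
  then show ?thesis by (rule Vspan_I)
qed

lemma Vspan_left:
  assumes "k \<le> t" "\<And>i. i < k \<Longrightarrow> H i = G i" "f \<in> Vspan k G"
  shows "f \<in> Vspan t H"
proof -
  obtain c where c: "f = (\<lambda>x. \<Sum>i<k. c i *\<^sub>R G i x)" using assms(3) unfolding Vspan_def by auto
  have "f = (\<lambda>x. \<Sum>i<t. (if i < k then c i else 0) *\<^sub>R H i x)"
  proof
    fix x
    have "(\<Sum>i<t. (if i < k then c i else 0) *\<^sub>R H i x) = (\<Sum>i<k. (if i < k then c i else 0) *\<^sub>R H i x)"
      by (rule sum.mono_neutral_right) (use assms(1) in auto)
    also have "\<dots> = f x" using assms(2) by (simp add: c)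
    finally show "f x = (\<Sum>i<t. (if i < k then c i else 0) *\<^sub>R H i x)" by simp
  qed
  then show ?thesis by (rule Vspan_I)
qed

lemma Vspan_right:
  assumes "\<And>i. i < k \<Longrightarrow> H (i + k) = G i" "f \<in> Vspan k G"
  shows "f \<in> Vspan (2*k) H"
proof -
  obtain c where c: "f = (\<lambda>x. \<Sum>i<k. c i *\<^sub>R G i x)" using assms(2) unfolding Vspan_def by auto
  let ?c = "\<lambda>i. if k \<le> i then c (i - k) else 0"
  have "f = (\<lambda>x. \<Sum>i<2*k. ?c i *\<^sub>R H i x)"
  proof
    fix x
    have "(\<Sum>i<2*k. ?c i *\<^sub>R H i x) = (\<Sum>i\<in>{k..<2*k}. ?c i *\<^sub>R H i x)"
      by (rule sum.mono_neutral_right) auto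
    also have "\<dots> = (\<Sum>i\<in>{0+k..<k+k}. ?c i *\<^sub>R H i x)" by (simp add: mult_2)
    also have "\<dots> = (\<Sum>i=0..<k. ?c (i+k) *\<^sub>R H (i+k) x)" by (rule sum.shift_bounds_nat_ivl)
    also have "\<dots> = f x" using assms(1) by (simp add: c atLeast0LessThan)
    finally show "f x = (\<Sum>i<2*k. ?c i *\<^sub>R H i x)" by simp
  qed
  then show ?thesis by (rule Vspan_I)
qed

lemma midpoint_sc:
  fixes L :: "'y \<Rightarrow> 'v::real_inner \<Rightarrow> real"
  assumes sc: "strongly_convex_loss \<mu> L gL"
  shows "L y ((1/2) *\<^sub>R a + (1/2) *\<^sub>R b) \<le> (L y a + L y b) / 2 - \<mu> / 8 * (norm (a - b))\<^sup>2"
proof -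
  let ?m = "(1/2) *\<^sub>R a + (1/2) *\<^sub>R b"
  have aa: "a = (1/2) *\<^sub>R a + (1/2) *\<^sub>R a" by (simp add: scaleR_add_left[symmetric])
  have bb: "b = (1/2) *\<^sub>R b + (1/2) *\<^sub>R b" by (simp add: scaleR_add_left[symmetric])
  have A: "a - ?m = (1/2) *\<^sub>R (a - b)"
    by (subst (1) aa) (simp add: algebra_simps)
  have B: "b - ?m = - ((1/2) *\<^sub>R (a - b))"
    by (subst (1) bb) (simp add: algebra_simps)
  have h: "\<forall>y p1 p2. L y p1 \<ge> L y p2 + inner (gL y p2) (p1 - p2) + \<mu> / 2 * (norm (p1 - p2))\<^sup>2"
    using sc unfolding strongly_convex_loss_def by blast
  have 1: "L y a \<ge> L y ?m + inner (gL y ?m) ((1/2) *\<^sub>R (a - b)) + \<mu> / 2 * (norm ((1/2) *\<^sub>R (a - b)))\<^sup>2"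
  proof -
    have "L y a \<ge> L y ?m + inner (gL y ?m) (a - ?m) + \<mu> / 2 * (norm (a - ?m))\<^sup>2" using h by blast
    then show ?thesis unfolding A .
  qed
  have 2: "L y b \<ge> L y ?m - inner (gL y ?m) ((1/2) *\<^sub>R (a - b)) + \<mu> / 2 * (norm ((1/2) *\<^sub>R (a - b)))\<^sup>2"
  proof -
    have "L y b \<ge> L y ?m + inner (gL y ?m) (b - ?m) + \<mu> / 2 * (norm (b - ?m))\<^sup>2" using h by blast
    then show ?thesis unfolding B by simp
  qed
  have n: "(norm ((1/2) *\<^sub>R (a - b)))\<^sup>2 = (norm (a - b))\<^sup>2 / 4"
    by (simp add: power2_eq_square)
  show ?thesis using 1 2 unfolding n by (simp add: field_simps)
qed

lemma argminV_props:
  assumes "\<exists>f\<in>Vspan t G. \<forall>h\<in>Vspan t G. risk P L f \<le> risk P L h"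
  shows "argminV P L t G \<in> Vspan t G" "\<And>h. h \<in> Vspan t G \<Longrightarrow> risk P L (argminV P L t G) \<le> risk P L h"
    "riskV P L t G = risk P L (argminV P L t G)"
proof -
  have *: "argminV P L t G \<in> Vspan t G \<and> (\<forall>h\<in>Vspan t G. risk P L (argminV P L t G) \<le> risk P L h)"
    unfolding argminV_def using someI_ex[OF assms[unfolded Bex_def]] .
  then show "argminV P L t G \<in> Vspan t G" "\<And>h. h \<in> Vspan t G \<Longrightarrow> risk P L (argminV P L t G) \<le> risk P L h"
    by auto
  show "riskV P L t G = risk P L (argminV P L t G)"
    unfolding riskV_def using * by (intro cInf_eq_minimum) auto
qed

lemma pointwise_key:
  fixes L :: "'y \<Rightarrow> 'v::real_inner \<Rightarrow> real" and P :: "('x \<times> 'y) measure"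
  assumes sc: "strongly_convex_loss \<mu> L gL"
    and integ: "\<And>f. f \<in> Vspan (2*k) H \<Longrightarrow>
        integrable P (\<lambda>z. L (snd z) (f (fst z))) \<and>
        integrable P (\<lambda>z. (norm (f (fst z)))\<^sup>2)"
    and m1: "\<exists>f\<in>Vspan k G. \<forall>h\<in>Vspan k G. risk P L f \<le> risk P L h"
    and m2: "\<exists>f\<in>Vspan k G'. \<forall>h\<in>Vspan k G'. risk P L f \<le> risk P L h"
    and m3: "\<exists>f\<in>Vspan (2*k) H. \<forall>h\<in>Vspan (2*k) H. risk P L f \<le> risk P L h"
    and H1: "\<And>i. i < k \<Longrightarrow> H i = G i"
    and H2: "\<And>i. i < k \<Longrightarrow> H (i + k) = G' i"
  shows "Dist P (argminV P L k G) (argminV P L k G') \<le>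
     4 / \<mu> * (riskV P L k G + riskV P L k G' - 2 * riskV P L (2*k) H)"
proof -
  have mu: "\<mu> > 0" using sc unfolding strongly_convex_loss_def by simp
  define f1 where "f1 = argminV P L k G"
  define f2 where "f2 = argminV P L k G'"
  have f1V: "f1 \<in> Vspan (2*k) H"
    using Vspan_left[OF _ H1 argminV_props(1)[OF m1]] unfolding f1_def by simp
  have f2V: "f2 \<in> Vspan (2*k) H"
    using Vspan_right[OF H2 argminV_props(1)[OF m2]] unfolding f2_def by simp
  define m where "m = (\<lambda>x. (1/2) *\<^sub>R f1 x + (1/2) *\<^sub>R f2 x)"
  define d where "d = (\<lambda>x. 1 *\<^sub>R f1 x + (-1) *\<^sub>R f2 x)"
  have mV: "m \<in> Vspan (2*k) H" unfolding m_def by (rule Vspan_lin[OF f1V f2V])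
  have dV: "d \<in> Vspan (2*k) H" unfolding d_def by (rule Vspan_lin[OF f1V f2V])
  have d: "d = (\<lambda>x. f1 x - f2 x)" unfolding d_def by auto
  note i1 = integ[OF f1V] and i2 = integ[OF f2V] and im = integ[OF mV] and id = integ[OF dV]
  have "riskV P L (2*k) H \<le> risk P L m"
    using argminV_props(2)[OF m3 mV] argminV_props(3)[OF m3] by simp
  also have "\<dots> \<le> (\<integral>z. (L (snd z) (f1 (fst z)) + L (snd z) (f2 (fst z))) / 2
        - \<mu> / 8 * (norm (f1 (fst z) - f2 (fst z)))\<^sup>2 \<partial>P)"
    unfolding risk_def m_def
    by (rule integral_mono) (use i1 i2 im id midpoint_sc[OF sc] in \<open>auto simp: m_def d\<close>)
  also have "\<dots> = (risk P L f1 + risk P L f2) / 2 - \<mu> / 8 * Dist P f1 f2"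
    unfolding risk_def Dist_def using i1 i2 id
    by (simp add: d integral_diff integral_add integral_divide_zero)
  finally have "riskV P L (2*k) H \<le> (risk P L f1 + risk P L f2) / 2 - \<mu> / 8 * Dist P f1 f2" .
  moreover have "riskV P L k G = risk P L f1" "riskV P L k G' = risk P L f2"
    using argminV_props(3)[OF m1] argminV_props(3)[OF m2] by (simp_all add: f1_def f2_def)
  ultimately show ?thesis using mu unfolding f1_def[symmetric] f2_def[symmetric]
    by (simp add: field_simps)
qed



theorem theorem5:
  fixes P :: "('x \<times> 'y) measure"
    and L :: "'y \<Rightarrow> real^'d \<Rightarrow> real"
    and gL :: "'y \<Rightarrow> real^'d \<Rightarrow> real^'d"
    and Q :: "('x \<Rightarrow> real^'d) measure"
    and \<mu> :: real and k :: nat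
  assumes "prob_space P" and "prob_space Q"
    and diff: "\<And>y p. (L y has_derivative (\<lambda>h. inner (gL y p) h)) (at p)"
    and cont: "\<And>y. continuous_on UNIV (gL y)"
    and sc: "strongly_convex_loss \<mu> L gL"
    and "k \<ge> 1"
    and integ: "\<And>t G f. (\<forall>i<t. G i \<in> space Q) \<Longrightarrow> f \<in> Vspan t G \<Longrightarrow>
        integrable P (\<lambda>z. L (snd z) (f (fst z))) \<and>
        integrable P (\<lambda>z. (norm (f (fst z)))\<^sup>2)"
    and minex: "\<And>t G. (\<forall>i<t. G i \<in> space Q) \<Longrightarrow>
        \<exists>f\<in>Vspan t G. \<forall>h\<in>Vspan t G. risk P L f \<le> risk P L h"
    and intk: "integrable (PiM {..<k} (\<lambda>_. Q)) (riskV P L k)"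
    and int2k: "integrable (PiM {..<2*k} (\<lambda>_. Q)) (riskV P L (2*k))"
  shows "(\<integral>\<^sup>+ GG. ennreal (Dist P (argminV P L k (fst GG)) (argminV P L k (snd GG)))
            \<partial>(PiM {..<k} (\<lambda>_. Q) \<Otimes>\<^sub>M PiM {..<k} (\<lambda>_. Q)))
         \<le> ennreal (8 / \<mu> * (Rbar P L Q k - Rbar P L Q (2*k)))"
proof -
  interpret Q: prob_space Q by fact
  interpret PS: product_prob_space "\<lambda>_. Q" by unfold_locales
  let ?M = "PiM {..<k} (\<lambda>_. Q)"
  let ?N = "PiM {k..<2*k} (\<lambda>_. Q)"
  let ?M2 = "PiM {..<2*k} (\<lambda>_. Q)"
  define S where "S = (\<lambda>G::nat \<Rightarrow> 'x \<Rightarrow> real^'d. \<lambda>i\<in>{k..<2*k}. G (i - k))"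
  define \<Phi> where "\<Phi> = (\<lambda>GG. merge {..<k} {k..<2*k} (fst GG, S (snd GG)))"
  have U: "{..<k} \<union> {k..<2*k} = {..<2*k}" by auto
  have pM: "prob_space ?M" by (rule prob_space_PiM) (simp add: Q.prob_space_axioms)
  have pN: "prob_space ?N" by (rule prob_space_PiM) (simp add: Q.prob_space_axioms)
  interpret pM: prob_space ?M by (rule pM)
  interpret MM: pair_prob_space ?M ?M by unfold_locales
  have S_meas: "S \<in> ?M \<rightarrow>\<^sub>M ?N"
    unfolding S_def by (intro measurable_restrict measurable_component_singleton) auto
  have distrS: "distr ?M ?N S = ?N"
  proof -
    have inj: "inj_on (\<lambda>i. i - k) {k..<2*k}" by (auto simp: inj_on_def)
    have fi: "(\<lambda>i. i - k) \<in> {k..<2*k} \<rightarrow> {..<k}" by auto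
    show ?thesis
      using distr_PiM_reindex[of "{..<k}" "\<lambda>_. Q", OF Q.prob_space_axioms inj fi]
      by (simp add: S_def)
  qed
  have pairD: "distr (?M \<Otimes>\<^sub>M ?M) (?M \<Otimes>\<^sub>M ?N) (\<lambda>(x,y). (x, S y)) = ?M \<Otimes>\<^sub>M ?N"
    using pair_measure_distr[of "\<lambda>x. x" ?M ?M S ?M ?N] distrS S_meas
    by (simp add: prob_space_imp_sigma_finite pN)
  have merge_d: "distr (?M \<Otimes>\<^sub>M ?N) ?M2 (merge {..<k} {k..<2*k}) = ?M2"
  proof -
    have "{..<k} \<inter> {k..<2*k} = {}" by auto
    then show ?thesis using PS.distr_merge[of "{..<k}" "{k..<2*k}"] U by simp
  qed
  have mm: "merge {..<k} {k..<2*k} \<in> ?M \<Otimes>\<^sub>M ?N \<rightarrow>\<^sub>M ?M2"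
    using measurable_merge[of "{..<k}" "{k..<2*k}" "\<lambda>_. Q"] U by simp
  have pm: "(\<lambda>(x,y). (x, S y)) \<in> ?M \<Otimes>\<^sub>M ?M \<rightarrow>\<^sub>M ?M \<Otimes>\<^sub>M ?N"
    using S_meas by measurable
  have \<Phi>_eq: "\<Phi> = merge {..<k} {k..<2*k} \<circ> (\<lambda>(x,y). (x, S y))"
    unfolding \<Phi>_def by (auto simp: fun_eq_iff)
  have \<Phi>_meas: "\<Phi> \<in> ?M \<Otimes>\<^sub>M ?M \<rightarrow>\<^sub>M ?M2"
    unfolding \<Phi>_eq by (rule measurable_comp[OF pm mm])
  have distr\<Phi>: "distr (?M \<Otimes>\<^sub>M ?M) ?M2 \<Phi> = ?M2"
    unfolding \<Phi>_eq using distr_distr[OF mm pm] pairD merge_d by simp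
  have spM: "\<forall>i<t. G i \<in> space Q" if "G \<in> space (PiM {..<t} (\<lambda>_. Q))" for G t
    using that by (auto simp: space_PiM PiE_def Pi_def)
  define F where "F = (\<lambda>GG. 4 / \<mu> * (riskV P L k (fst GG) + riskV P L k (snd GG) - 2 * riskV P L (2*k) (\<Phi> GG)))"
  have key: "Dist P (argminV P L k (fst GG)) (argminV P L k (snd GG)) \<le> F GG"
    if GG: "GG \<in> space (?M \<Otimes>\<^sub>M ?M)" for GG
  proof -
    have G1: "fst GG \<in> space ?M" "snd GG \<in> space ?M" using GG by (auto simp: space_pair_measure)
    have H: "\<Phi> GG \<in> space ?M2" using measurable_space[OF \<Phi>_meas GG] .
    have H1: "\<Phi> GG i = fst GG i" if "i < k" for i using that by (simp add: \<Phi>_def merge_def)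
    have H2: "\<Phi> GG (i + k) = snd GG i" if "i < k" for i using that by (simp add: \<Phi>_def merge_def S_def)
    show ?thesis unfolding F_def
      by (rule pointwise_key[OF sc _ minex[OF spM[OF G1(1)]] minex[OF spM[OF G1(2)]] minex[OF spM[OF H]] H1 H2])
        (use integ[OF spM[OF H]] in auto)
  qed
  have Dnn: "0 \<le> Dist P f1 f2" for f1 f2 :: "'x \<Rightarrow> real^'d"
    unfolding Dist_def by (rule integral_nonneg_AE) simp
  have b1: "riskV P L k \<in> borel_measurable ?M" using intk by auto
  have b3: "riskV P L (2*k) \<in> borel_measurable ?M2" using int2k by auto
  have df: "distr (?M \<Otimes>\<^sub>M ?M) ?M fst = ?M" by (rule pM.distr_pair_fst)
  have i1: "integrable (?M \<Otimes>\<^sub>M ?M) (\<lambda>GG. riskV P L k (fst GG))"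
    using integrable_distr_eq[OF measurable_fst[of ?M ?M] b1] df intk by simp
  have e1: "integral\<^sup>L (?M \<Otimes>\<^sub>M ?M) (\<lambda>GG. riskV P L k (fst GG)) = Rbar P L Q k"
    using integral_distr[OF measurable_fst[of ?M ?M] b1] df unfolding Rbar_def by simp
  have sw: "(\<lambda>(x,y). riskV P L k (fst (y,x))) = (\<lambda>GG. riskV P L k (snd GG))" by auto
  have i2: "integrable (?M \<Otimes>\<^sub>M ?M) (\<lambda>GG. riskV P L k (snd GG))"
    using MM.integrable_product_swap[OF i1] unfolding sw .
  have e2: "integral\<^sup>L (?M \<Otimes>\<^sub>M ?M) (\<lambda>GG. riskV P L k (snd GG)) = Rbar P L Q k"
    using MM.integral_product_swap[of "\<lambda>GG. riskV P L k (fst GG)"] i1 e1 unfolding sw by auto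
  have i3: "integrable (?M \<Otimes>\<^sub>M ?M) (\<lambda>GG. riskV P L (2*k) (\<Phi> GG))"
    using integrable_distr_eq[OF \<Phi>_meas b3] distr\<Phi> int2k by simp
  have e3: "integral\<^sup>L (?M \<Otimes>\<^sub>M ?M) (\<lambda>GG. riskV P L (2*k) (\<Phi> GG)) = Rbar P L Q (2*k)"
    using integral_distr[OF \<Phi>_meas b3] distr\<Phi> unfolding Rbar_def by simp
  have Fint: "integrable (?M \<Otimes>\<^sub>M ?M) F" unfolding F_def using i1 i2 i3 by auto
  have Fval: "integral\<^sup>L (?M \<Otimes>\<^sub>M ?M) F = 8 / \<mu> * (Rbar P L Q k - Rbar P L Q (2*k))"
    unfolding F_def using i1 i2 i3 e1 e2 e3 by (simp add: field_simps)
  have "(\<integral>\<^sup>+ GG. ennreal (Dist P (argminV P L k (fst GG)) (argminV P L k (snd GG))) \<partial>(?M \<Otimes>\<^sub>M ?M))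
      \<le> (\<integral>\<^sup>+ GG. ennreal (F GG) \<partial>(?M \<Otimes>\<^sub>M ?M))"
    by (rule nn_integral_mono) (use key in \<open>auto intro: ennreal_leI\<close>)
  also have "\<dots> = ennreal (integral\<^sup>L (?M \<Otimes>\<^sub>M ?M) F)"
    by (rule nn_integral_eq_integral[OF Fint]) (use key Dnn order_trans in \<open>blast intro: AE_I2\<close>)
  finally show ?thesis unfolding Fval .
qed
end
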